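(* Suppose $\kappa$ is a cardinal such that $\mathfrak{s}(\mathbb{R})\leq\kappa=\mathrm{cof}(\kappa^{\aleph_0},\subseteq)$. Then $\mathfrak{z}\leq\kappa$.
   Context: All spaces are infinite Hausdorff topological spaces. For infinite sets $U, A$, say $U$ splits $A$ if both $A\cap U$ and $A\setminus U$ are infinite. $\mathfrak{s}(\mathbb{R})$ is the smallest cardinality of a family $\mathcal{U}$ of open subsets of $\mathbb{R}$ (usual topology) such that every infinite $A\subseteq\mathbb{R}$ is split by some $U\in\mathcal{U}$. A space is non-sequential if it is not discrete and contains no non-trivial convergent sequence; $\mathfrak{z}$ is the smallest weight of a compact non-sequential space. $\mathrm{cof}(\kappa^{\aleph_0},\subseteq)$ is the smallest cardinality of a family $\mathcal{C}$ of countable subsets of $\kappa$ such that every countable subset of $\kappa$ is contained in some member of $\mathcal{C}$. *)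

theory Defs
  imports "HOL-Analysis.Analysis" "HOL-Library.Equipollence"
begin

definition splits :: "'a set \<Rightarrow> 'a set \<Rightarrow> bool" where
  "splits U A \<longleftrightarrow> infinite (A \<inter> U) \<and> infinite (A - U)"

definition real_splitting_family :: "real set set \<Rightarrow> bool" where
  "real_splitting_family \<U> \<longleftrightarrow>
     (\<forall>U\<in>\<U>. open U) \<and> (\<forall>A. infinite A \<longrightarrow> (\<exists>U\<in>\<U>. splits U A))"

definition sR_le :: "'a set \<Rightarrow> bool" where
  "sR_le K \<longleftrightarrow> (\<exists>\<U>. real_splitting_family \<U> \<and> \<U> \<lesssim> K)"

definition countable_cofinal :: "'a set \<Rightarrow> 'a set set \<Rightarrow> bool" where
  "countable_cofinal K \<C> \<longleftrightarrow>
     (\<forall>C\<in>\<C>. C \<subseteq> K \<and> countable C) \<and>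
     (\<forall>A. A \<subseteq> K \<and> countable A \<longrightarrow> (\<exists>C\<in>\<C>. A \<subseteq> C))"

definition cof_countable_eq :: "'a set \<Rightarrow> bool" where
  "cof_countable_eq K \<longleftrightarrow>
     (\<exists>\<C>. countable_cofinal K \<C> \<and> \<C> \<lesssim> K) \<and>
     (\<forall>\<C>. countable_cofinal K \<C> \<longrightarrow> K \<lesssim> \<C>)"

definition base_of :: "'a topology \<Rightarrow> 'a set set \<Rightarrow> bool" where
  "base_of X \<B> \<longleftrightarrow> (\<forall>V\<in>\<B>. openin X V) \<and>
     (\<forall>U x. openin X U \<and> x \<in> U \<longrightarrow> (\<exists>V\<in>\<B>. x \<in> V \<and> V \<subseteq> U))"

definition discrete_space :: "'a topology \<Rightarrow> bool" where
  "discrete_space X \<longleftrightarrow> (\<forall>S. S \<subseteq> topspace X \<longrightarrow> openin X S)"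

definition has_nontrivial_convergent_seq :: "'a topology \<Rightarrow> bool" where
  "has_nontrivial_convergent_seq X \<longleftrightarrow>
     (\<exists>f l. range f \<subseteq> topspace X \<and> inj f \<and> limitin X f l sequentially)"

definition non_sequential :: "'a topology \<Rightarrow> bool" where
  "non_sequential X \<longleftrightarrow> \<not> discrete_space X \<and> \<not> has_nontrivial_convergent_seq X"

text \<open>Points are taken in a type of cardinality 2^|'a| \<ge> 2^|K|,
  which is enough since a T0 space of weight w has at most 2^w points.\<close>
definition z_le :: "'a set \<Rightarrow> bool" where
  "z_le K \<longleftrightarrow> (\<exists>X :: 'a set topology.
      infinite (topspace X) \<and> Hausdorff_space X \<and> compact_space X \<and> non_sequential X \<and>
      (\<exists>\<B>. base_of X \<B> \<and> \<B> \<lesssim> K))"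

end

theory Submission
  imports Defs "HOL-Library.Countable_Set_Type" "HOL-Algebra.Free_Abelian_Groups"
begin



abbreviation om :: "(nat set \<times> nat set) set" where "om \<equiv> cardSuc natLeq"
definition Om :: "nat set set" where "Om = Field om"
definition olt :: "nat set \<Rightarrow> nat set \<Rightarrow> bool" where "olt a b \<longleftrightarrow> (a,b) \<in> om \<and> a \<noteq> b"

lemma om_card: "Card_order om" by (simp add: cardSuc_Card_order natLeq_Card_order)
lemma om_wo: "Well_order om" by (simp add: cardSuc_Well_order natLeq_Card_order)

lemma om_wf: "wf {(a,b). olt a b}"
proof -
  have "wf (om - Id)" using om_wo unfolding well_order_on_def by blast
  moreover have "{(a,b). olt a b} = om - Id" by (auto simp: olt_def)
  ultimately show ?thesis by simp
qed

lemma olt_Om: "olt a b \<Longrightarrow> a \<in> Om \<and> b \<in> Om"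
  by (auto simp: olt_def Om_def Field_def)

lemma olt_trans: "olt a b \<Longrightarrow> olt b c \<Longrightarrow> olt a c"
proof -
  assume ab: "olt a b" and bc: "olt b c"
  have tr: "trans om" and an: "antisym om" using om_wo
    unfolding well_order_on_def linear_order_on_def partial_order_on_def preorder_on_def by auto
  have "(a,c) \<in> om" using ab bc tr unfolding olt_def trans_def by blast
  moreover have "a \<noteq> c" using ab bc an unfolding olt_def antisym_def by blast
  ultimately show ?thesis by (simp add: olt_def)
qed

lemma underS_olt: "underS om a = {b. olt b a}"
  by (auto simp: underS_def olt_def)

lemma Om_countable_below: "a \<in> Om \<Longrightarrow> countable {b. olt b a}"
proof -
  assume a: "a \<in> Om"
  have "|underS om a| <o om" using card_of_underS[OF om_card] a by (simp add: Om_def)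
  hence "|underS om a| \<le>o natLeq"
    using cardSuc_ordLeq_ordLess[OF natLeq_Card_order card_of_Card_order] by blast
  thus ?thesis by (simp add: underS_olt countable_card_le_natLeq)
qed

lemma Om_uncountable: "\<not> countable Om"
proof
  assume "countable Om"
  hence "|Om| \<le>o natLeq" by (simp add: countable_card_le_natLeq)
  moreover have "|Om| =o om" unfolding Om_def using card_of_Field_ordIso[OF om_card] .
  ultimately have "om \<le>o natLeq" using ordIso_ordLeq_trans ordIso_symmetric by blast
  moreover have "natLeq <o om" using cardSuc_greater[OF natLeq_Card_order] .
  ultimately show False using not_ordLeq_ordLess by blast
qed

lemma Om_unbounded: "a \<in> Om \<Longrightarrow> \<exists>b\<in>Om. olt a b"
proof -
  assume a: "a \<in> Om"
  have "countable (insert a {b. olt b a})" using Om_countable_below[OF a] by simp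
  then obtain b where b: "b \<in> Om" "b \<notin> insert a {b. olt b a}"
    using Om_uncountable by (metis countable_subset subsetI)
  have "total_on Om om" using om_wo unfolding well_order_on_def linear_order_on_def Om_def by blast
  hence "(a,b) \<in> om \<or> (b,a) \<in> om" using a b unfolding total_on_def by blast
  thus ?thesis using b by (auto simp: olt_def)
qed

lemma Om_bound: "countable B \<Longrightarrow> B \<subseteq> Om \<Longrightarrow> \<exists>a\<in>Om. \<forall>b\<in>B. olt b a"
proof -
  assume cB: "countable B" and BO: "B \<subseteq> Om"
  have tr: "trans om" and an: "antisym om" using om_wo
    unfolding well_order_on_def linear_order_on_def partial_order_on_def preorder_on_def by auto
  have ch: "relChain om (underS om)" unfolding relChain_def using underS_incr[OF tr an] by blast
  have sub: "B \<subseteq> (\<Union>i\<in>Field om. underS om i)"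
  proof
    fix b assume "b \<in> B"
    then obtain c where "c \<in> Om" "olt b c" using BO Om_unbounded by blast
    thus "b \<in> (\<Union>i\<in>Field om. underS om i)" by (auto simp: Om_def underS_olt)
  qed
  have "|B| \<le>o natLeq" using cB by (simp add: countable_card_le_natLeq)
  then obtain i where "i \<in> Field om" "B \<subseteq> underS om i"
    using cardSuc_UNION[OF natLeq_Card_order _ ch sub] by (auto simp: Field_natLeq)
  thus ?thesis by (auto simp: Om_def underS_olt)
qed

lemma Om_min: "\<exists>a\<in>Om. \<forall>b. \<not> olt b a"
proof -
  obtain x where "x \<in> Om" using Om_uncountable by (metis countable_empty ex_in_conv)
  then obtain a where a: "a \<in> Om" "\<forall>y. (y,a) \<in> {(a,b). olt a b} \<longrightarrow> y \<notin> Om"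
    using wfE_min[OF om_wf, of x Om] by metis
  show ?thesis
  proof (intro bexI[OF _ a(1)] allI notI)
    fix b assume "olt b a"
    thus False using a(2) olt_Om by blast
  qed
qed

lemma Om_lepoll: "\<not> countable K \<Longrightarrow> Om \<lesssim> K"
proof -
  assume "\<not> countable K"
  hence "\<not> |K| \<le>o natLeq" by (simp add: countable_card_le_natLeq)
  hence "natLeq <o |K|" using not_ordLeq_iff_ordLess natLeq_Well_order card_of_Well_order by blast
  hence "om \<le>o |K|" using cardSuc_least[OF natLeq_Card_order card_of_Card_order] by blast
  hence "|Om| \<le>o |K|" unfolding Om_def using card_of_Field_ordIso[OF om_card] ordIso_ordLeq_trans by blast
  thus ?thesis by (simp add: lepoll_def card_of_ordLeq[symmetric])
qed



definition tt :: "(nat \<Rightarrow> bool) \<Rightarrow> nat \<Rightarrow> real" where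
  "tt z i = (if z i then 2 / 3 ^ Suc i else 0)"
definition cantor :: "(nat \<Rightarrow> bool) \<Rightarrow> real" where
  "cantor z = (suminf (\<lambda>i. tt z i))"

lemma geo_tail: "(\<lambda>n. 2 / 3 ^ Suc (n + k) :: real) sums (1 / 3 ^ k)"
proof -
  have "(\<lambda>n. (1/3::real) ^ n) sums (1 / (1 - 1/3))" by (rule geometric_sums) simp
  hence "(\<lambda>n. (2 / 3 ^ Suc k) * (1/3::real) ^ n) sums ((2 / 3 ^ Suc k) * (1 / (1 - 1/3)))"
    by (rule sums_mult)
  moreover have "(2 / 3 ^ Suc k) * (1 / (1 - 1/3)) = (1 / 3 ^ k :: real)" by simp
  moreover have "\<And>n. (2 / 3 ^ Suc k) * (1/3::real) ^ n = 2 / 3 ^ Suc (n + k)"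
    by (simp add: power_add power_one_over field_simps)
  ultimately show ?thesis by simp
qed

lemma tt_bound: "\<bar>tt z i\<bar> \<le> 2 / 3 ^ Suc i" by (simp add: tt_def)

lemma tt_summable: "summable (tt z)"
proof (rule summable_comparison_test[of _ "\<lambda>i. 2 / 3 ^ Suc i"])
  show "\<exists>N. \<forall>n\<ge>N. norm (tt z n) \<le> 2 / 3 ^ Suc n" using tt_bound by auto
  show "summable (\<lambda>i. 2 / 3 ^ Suc i :: real)" using geo_tail[of 0] by (auto simp: sums_iff)
qed

definition DD :: "(nat \<Rightarrow> bool) \<Rightarrow> (nat \<Rightarrow> bool) \<Rightarrow> nat \<Rightarrow> real" where
  "DD z z' i = tt z i - tt z' i"

lemma DD_bound: "\<bar>DD z z' i\<bar> \<le> 2 / 3 ^ Suc i"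
  by (simp add: DD_def tt_def)

lemma DD_summable: "summable (DD z z')"
  unfolding DD_def using tt_summable by (intro summable_diff)

lemma DD_tail: "\<bar>suminf (\<lambda>n. DD z z' (n + k))\<bar> \<le> 1 / 3 ^ k"
proof -
  have s: "summable (\<lambda>n. DD z z' (n + k))" using DD_summable summable_iff_shift by blast
  have g: "summable (\<lambda>n. 2 / 3 ^ Suc (n + k) :: real)" using geo_tail sums_summable by blast
  have "(suminf (\<lambda>n. DD z z' (n + k))) \<le> (suminf (\<lambda>n. 2 / 3 ^ Suc (n + k)))"
    using DD_bound by (intro suminf_le s g) (meson abs_le_D1)
  moreover have "(suminf (\<lambda>n. - (2 / 3 ^ Suc (n + k)))) \<le> (suminf (\<lambda>n. DD z z' (n + k)))"
    using DD_bound g by (intro suminf_le s summable_minus) (meson abs_le_D2 minus_le_iff)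
  moreover have "(suminf (\<lambda>n. 2 / 3 ^ Suc (n + k))) = (1 / 3 ^ k :: real)" using geo_tail sums_unique by metis
  moreover have "(suminf (\<lambda>n. - (2 / 3 ^ Suc (n + k)))) = - (1 / 3 ^ k :: real)"
    using geo_tail sums_unique sums_minus by metis
  ultimately show ?thesis by linarith
qed

lemma cantor_diff: "cantor z - cantor z' = (suminf (\<lambda>n. DD z z' (n + k))) + sum (DD z z') {..<k}"
proof -
  have "cantor z - cantor z' = (suminf (\<lambda>i. DD z z' i))"
    unfolding cantor_def DD_def using tt_summable by (simp add: suminf_diff)
  also have "\<dots> = (suminf (\<lambda>n. DD z z' (n + k))) + sum (DD z z') {..<k}"
    using suminf_split_initial_segment[OF DD_summable] by simp
  finally show ?thesis .
qed

definition agree :: "nat \<Rightarrow> (nat \<Rightarrow> bool) \<Rightarrow> (nat \<Rightarrow> bool) \<Rightarrow> bool" where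
  "agree m z z' \<longleftrightarrow> (\<forall>j<m. z j = z' j)"

lemma cantor_close: "agree m z z' \<Longrightarrow> \<bar>cantor z - cantor z'\<bar> \<le> 1 / 3 ^ m"
proof -
  assume a: "agree m z z'"
  have "sum (DD z z') {..<m} = 0" using a by (auto simp: agree_def DD_def tt_def intro!: sum.neutral)
  thus ?thesis using cantor_diff[of z z' m] DD_tail[of z z' m] by simp
qed

lemma cantor_gt: "agree m z z' \<Longrightarrow> z m \<Longrightarrow> \<not> z' m \<Longrightarrow> cantor z > cantor z'"
proof -
  assume a: "agree m z z'" and zm: "z m" and zm': "\<not> z' m"
  have "sum (DD z z') {..<Suc m} = DD z z' m"
    using a by (auto simp: agree_def DD_def tt_def intro!: sum.neutral)
  also have "\<dots> = 2 / 3 ^ Suc m" using zm zm' by (simp add: DD_def tt_def)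
  finally have "cantor z - cantor z' = (suminf (\<lambda>n. DD z z' (n + Suc m))) + 2 / 3 ^ Suc m"
    using cantor_diff[of z z' "Suc m"] by simp
  moreover have "\<bar>suminf (\<lambda>n. DD z z' (n + Suc m))\<bar> \<le> 1 / 3 ^ Suc m" by (rule DD_tail)
  moreover have "(1 / 3 ^ Suc m :: real) < 2 / 3 ^ Suc m" by (simp add: divide_strict_right_mono)
  ultimately show ?thesis by linarith
qed

lemma cantor_inj: "inj cantor"
proof (rule injI, rule ccontr)
  fix z z' :: "nat \<Rightarrow> bool" assume eq: "cantor z = cantor z'" and ne: "z \<noteq> z'"
  then obtain i where "z i \<noteq> z' i" by auto
  define m where "m = (LEAST i. z i \<noteq> z' i)"
  have zm: "z m \<noteq> z' m" unfolding m_def by (rule LeastI) fact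
  have ag: "agree m z z'" unfolding agree_def m_def using not_less_Least by blast
  have "agree m z' z" using ag by (auto simp: agree_def)
  thus False using cantor_gt[OF ag] cantor_gt[of m z' z] zm eq by (cases "z m") auto
qed

definition popen :: "(nat \<Rightarrow> bool) set \<Rightarrow> bool" where
  "popen G \<longleftrightarrow> (\<forall>z\<in>G. \<exists>m. \<forall>z'. agree m z z' \<longrightarrow> z' \<in> G)"
definition dd :: "(nat \<Rightarrow> bool) set \<Rightarrow> (nat \<Rightarrow> bool) \<Rightarrow> nat" where
  "dd G z = (LEAST m. \<forall>z'. agree m z z' \<longrightarrow> z' \<in> G)"
definition Wset :: "(nat \<Rightarrow> bool) set \<Rightarrow> nat set \<Rightarrow> (nat \<Rightarrow> bool) set" where
  "Wset G S = {z \<in> G. dd G z \<in> S}"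
definition Eset :: "(nat \<Rightarrow> bool) set \<Rightarrow> nat set \<Rightarrow> (nat \<Rightarrow> bool) set" where
  "Eset G S = {z \<in> G. dd G z \<notin> S}"

lemma dd_prop: "popen G \<Longrightarrow> z \<in> G \<Longrightarrow> agree (dd G z) z z' \<Longrightarrow> z' \<in> G"
proof -
  assume G: "popen G" and z: "z \<in> G" and a: "agree (dd G z) z z'"
  obtain m where "\<forall>z'. agree m z z' \<longrightarrow> z' \<in> G" using G z unfolding popen_def by blast
  hence "\<forall>z'. agree (dd G z) z z' \<longrightarrow> z' \<in> G" unfolding dd_def by (rule LeastI)
  thus ?thesis using a by blast
qed

lemma agree_trans: "agree m a b \<Longrightarrow> agree m b c \<Longrightarrow> agree m a c"
  by (auto simp: agree_def)
lemma agree_sym: "agree m a b \<Longrightarrow> agree m b a"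
  by (auto simp: agree_def)
lemma agree_mono: "agree m a b \<Longrightarrow> m' \<le> m \<Longrightarrow> agree m' a b"
  by (auto simp: agree_def)

lemma dd_const:
  assumes G: "popen G" and z: "z \<in> G" and a: "agree (dd G z) z z'"
  shows "z' \<in> G \<and> dd G z' = dd G z"
proof
  show z': "z' \<in> G" using dd_prop[OF G z a] .
  have "dd G z' \<le> dd G z" unfolding dd_def[of G z']
  proof (rule Least_le, intro allI impI)
    fix z'' assume "agree (dd G z) z' z''"
    hence "agree (dd G z) z z''" using a agree_trans by blast
    thus "z'' \<in> G" using dd_prop[OF G z] by blast
  qed
  moreover have "\<not> dd G z' < dd G z"
  proof
    assume lt: "dd G z' < dd G z"
    have "dd G z \<le> dd G z'" unfolding dd_def[of G z]
    proof (rule Least_le, intro allI impI)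
      fix z'' assume "agree (dd G z') z z''"
      moreover have "agree (dd G z') z' z" using agree_mono[OF agree_sym[OF a]] lt by simp
      ultimately have "agree (dd G z') z' z''" using agree_trans by blast
      thus "z'' \<in> G" using dd_prop[OF G z'] by blast
    qed
    thus False using lt by simp
  qed
  ultimately show "dd G z' = dd G z" by simp
qed

lemma Wset_open:
  assumes G: "popen G" and z: "z \<in> Wset G S" and a: "agree (dd G z) z z'"
  shows "z' \<in> Wset G S"
proof -
  have zG: "z \<in> G" and zS: "dd G z \<in> S" using z by (auto simp: Wset_def)
  have "z' \<in> G \<and> dd G z' = dd G z" using dd_const[OF G zG a] .
  thus ?thesis using zS by (simp add: Wset_def)
qed
lemma Eset_open:
  assumes G: "popen G" and z: "z \<in> Eset G S" and a: "agree (dd G z) z z'"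
  shows "z' \<in> Eset G S"
proof -
  have zG: "z \<in> G" and zS: "dd G z \<notin> S" using z by (auto simp: Eset_def)
  have "z' \<in> G \<and> dd G z' = dd G z" using dd_const[OF G zG a] .
  thus ?thesis using zS by (simp add: Eset_def)
qed
lemma WE_disj: "Wset G S \<inter> Eset G S = {}"
  by (auto simp: Wset_def Eset_def)

lemma conv_agree:
  assumes "\<forall>j. eventually (\<lambda>n. q n j = q0 j) sequentially"
  shows "\<exists>N. \<forall>n\<ge>N. agree m (q n) q0"
proof -
  have "eventually (\<lambda>n. \<forall>j\<in>{..<m}. q n j = q0 j) sequentially"
    using assms by (intro eventually_ball_finite) auto
  thus ?thesis unfolding eventually_sequentially agree_def by auto
qed

lemma D_infinite:
  assumes G: "popen G" and conv: "\<forall>j. eventually (\<lambda>n. q n j = q0 j) sequentially"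
    and inf: "infinite {n. q n \<in> G}" and q0: "q0 \<notin> G"
  shows "infinite ((\<lambda>n. dd G (q n)) ` {n. q n \<in> G})"
proof
  assume fin: "finite ((\<lambda>n. dd G (q n)) ` {n. q n \<in> G})"
  have "\<exists>N. {n. q n \<in> G \<and> dd G (q n) = m} \<subseteq> {..<N}" for m
  proof -
    obtain N where N: "\<forall>n\<ge>N. agree m (q n) q0" using conv_agree[OF conv] by blast
    have "n < N" if "q n \<in> G" "dd G (q n) = m" for n
    proof (rule ccontr)
      assume "\<not> n < N"
      hence "agree m (q n) q0" using N by simp
      hence "q0 \<in> G" using dd_prop[OF G that(1)] that(2) by simp
      thus False using q0 by simp
    qed
    thus ?thesis by blast
  qed
  hence "finite {n. q n \<in> G \<and> dd G (q n) = m}" for m by (meson finite_lessThan finite_subset)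
  hence "finite (\<Union>m\<in>(\<lambda>n. dd G (q n)) ` {n. q n \<in> G}. {n. q n \<in> G \<and> dd G (q n) = m})"
    using fin by blast
  moreover have "{n. q n \<in> G} \<subseteq> (\<Union>m\<in>(\<lambda>n. dd G (q n)) ` {n. q n \<in> G}. {n. q n \<in> G \<and> dd G (q n) = m})"
    by blast
  ultimately show False using inf finite_subset by blast
qed

lemma WE_infinite:
  assumes "infinite ((\<lambda>n. dd G (q n)) ` {n. q n \<in> G} \<inter> S)"
    and "infinite ((\<lambda>n. dd G (q n)) ` {n. q n \<in> G} - S)"
  shows "infinite {n. q n \<in> Wset G S}" "infinite {n. q n \<in> Eset G S}"
proof -
  have "(\<lambda>n. dd G (q n)) ` {n. q n \<in> G} \<inter> S \<subseteq> (\<lambda>n. dd G (q n)) ` {n. q n \<in> Wset G S}"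
    by (auto simp: Wset_def)
  thus "infinite {n. q n \<in> Wset G S}" using assms(1) finite_subset by blast
  have "(\<lambda>n. dd G (q n)) ` {n. q n \<in> G} - S \<subseteq> (\<lambda>n. dd G (q n)) ` {n. q n \<in> Eset G S}"
    by (auto simp: Eset_def)
  thus "infinite {n. q n \<in> Eset G S}" using assms(2) finite_subset by blast
qed

lemma small_pow: "(e::real) > 0 \<Longrightarrow> \<exists>m. 1 / 3 ^ m < e"
proof -
  assume "e > 0"
  then obtain m where "(1/3::real) ^ m < e" using real_arch_pow_inv[of e "1/3"] by auto
  thus ?thesis by (auto simp: power_one_over)
qed

lemma UC_popen: "open U \<Longrightarrow> popen (cantor -` U)"
  unfolding popen_def
proof
  fix z assume U: "open U" and z: "z \<in> cantor -` U"
  then obtain e where e: "e > 0" "ball (cantor z) e \<subseteq> U" using open_contains_ball by blast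
  obtain m where m: "1 / 3 ^ m < e" using small_pow[OF e(1)] by blast
  show "\<exists>m. \<forall>z'. agree m z z' \<longrightarrow> z' \<in> cantor -` U"
  proof (intro exI allI impI)
    fix z' assume "agree m z z'"
    hence "\<bar>cantor z - cantor z'\<bar> < e" using cantor_close m by fastforce
    hence "cantor z' \<in> ball (cantor z) e" by (simp add: dist_real_def)
    thus "z' \<in> cantor -` U" using e by auto
  qed
qed


lemma split_nat:
  assumes rsf: "real_splitting_family UU" and D: "infinite (D::nat set)"
  shows "\<exists>U\<in>UU. infinite (D \<inter> {n. real n \<in> U}) \<and> infinite (D - {n. real n \<in> U})"
proof -
  have "infinite (real ` D)" using D by (simp add: finite_image_iff)
  then obtain U where U: "U \<in> UU" "splits U (real ` D)" using rsf unfolding real_splitting_family_def by blast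
  have "real ` D \<inter> U = real ` (D \<inter> {n. real n \<in> U})" by auto
  moreover have "real ` D - U = real ` (D - {n. real n \<in> U})" by auto
  ultimately show ?thesis using U unfolding splits_def by (metis finite_imageI)
qed

lemma split_cantor:
  assumes rsf: "real_splitting_family UU" and q: "inj q"
    and conv: "\<forall>j. eventually (\<lambda>n. q n j = q0 j) sequentially"
  shows "\<exists>U\<in>UU. infinite {n. q n \<in> cantor -` U} \<and> q0 \<notin> cantor -` U"
proof -
  have "inj (cantor \<circ> q)" using q cantor_inj by (simp add: inj_compose)
  hence "infinite (range (cantor \<circ> q))" by (rule range_inj_infinite)
  then obtain U where U: "U \<in> UU" "splits U (range (cantor \<circ> q))"
    using rsf unfolding real_splitting_family_def by blast
  have opU: "open U" using rsf U(1) unfolding real_splitting_family_def by blast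
  have "range (cantor \<circ> q) \<inter> U \<subseteq> (cantor \<circ> q) ` {n. q n \<in> cantor -` U}" by auto
  hence inf1: "infinite {n. q n \<in> cantor -` U}" using U(2) unfolding splits_def
    by (meson finite_imageI finite_subset)
  have "q0 \<notin> cantor -` U"
  proof
    assume q0: "q0 \<in> cantor -` U"
    obtain m where m: "\<forall>z'. agree m q0 z' \<longrightarrow> z' \<in> cantor -` U"
      using UC_popen[OF opU] q0 unfolding popen_def by blast
    obtain N where N: "\<forall>n\<ge>N. agree m (q n) q0" using conv_agree[OF conv] by blast
    have "range (cantor \<circ> q) - U \<subseteq> (cantor \<circ> q) ` {..<N}"
    proof
      fix y assume y: "y \<in> range (cantor \<circ> q) - U"
      then obtain n where n: "y = cantor (q n)" by auto
      have "\<not> N \<le> n"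
      proof
        assume "N \<le> n"
        hence "agree m q0 (q n)" using N agree_sym by blast
        hence "cantor (q n) \<in> U" using m by blast
        thus False using y n by simp
      qed
      thus "y \<in> (cantor \<circ> q) ` {..<N}" using n by auto
    qed
    hence "finite (range (cantor \<circ> q) - U)" by (meson finite_imageI finite_lessThan finite_subset)
    thus False using U(2) unfolding splits_def by blast
  qed
  thus ?thesis using U(1) inf1 by blast
qed

lemma K_uncountable:
  assumes "sR_le K" and "cof_countable_eq K"
  shows "\<not> countable K"
proof
  assume cK: "countable K"
  have "countable_cofinal K {K}" using cK unfolding countable_cofinal_def by auto
  moreover have "\<forall>C. countable_cofinal K C \<longrightarrow> K \<lesssim> C" using assms(2) unfolding cof_countable_eq_def by (elim conjE)
  ultimately have "K \<lesssim> {K}" by (elim allE impE)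
  obtain UU where UU: "real_splitting_family UU" "UU \<lesssim> K" using assms(1) unfolding sR_le_def by blast
  have "UU \<lesssim> {K}" using lepoll_trans[OF UU(2) \<open>K \<lesssim> {K}\<close>] .
  hence "UU \<lesssim> {()}" by (rule lepoll_trans2[OF _ singleton_eqpoll])
  hence "\<exists>x. UU \<subseteq> {x}" by (simp only: subset_singleton_iff_lepoll)
  then obtain U0 where U0: "UU \<subseteq> {U0}" by blast
  define A0 where "A0 = range (real :: nat \<Rightarrow> real)"
  have A0: "infinite A0" unfolding A0_def by (rule range_inj_infinite) (simp add: inj_on_def)
  show False
  proof (cases "infinite (A0 \<inter> U0)")
    case True
    then obtain U where "U \<in> UU" "splits U (A0 \<inter> U0)" using UU(1) unfolding real_splitting_family_def by blast
    hence "U = U0" "infinite (A0 \<inter> U0 - U)" using U0 unfolding splits_def by auto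
    moreover have "A0 \<inter> U0 - U0 = {}" by blast
    ultimately show False by simp
  next
    case False
    hence "infinite (A0 - U0)" using A0 by (metis Int_Diff_Un finite_UnI)
    then obtain U where "U \<in> UU" "splits U (A0 - U0)" using UU(1) unfolding real_splitting_family_def by blast
    hence "U = U0" "infinite ((A0 - U0) \<inter> U)" using U0 unfolding splits_def by auto
    moreover have "(A0 - U0) \<inter> U0 = {}" by blast
    ultimately show False by simp
  qed
qed

lemma times_lepoll_K:
  assumes "infinite K" "A \<lesssim> K" "B \<lesssim> K"
  shows "A \<times> B \<lesssim> K"
proof -
  have "A \<times> B \<lesssim> K \<times> K" by (rule times_lepoll_mono[OF assms(2,3)])
  moreover have "|K \<times> K| \<le>o |K|" using card_of_Times_same_infinite[OF assms(1)] ordIso_iff_ordLeq by blast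
  hence "K \<times> K \<lesssim> K" unfolding lepoll_def card_of_ordLeq[symmetric] .
  ultimately show ?thesis by (rule lepoll_trans)
qed

lemma compact_infinite_not_discrete:
  assumes "compact_space X" "infinite (topspace X)"
  shows "\<not> discrete_space X"
proof
  assume "discrete_space X"
  hence "discrete_topology (topspace X) = X"
    unfolding discrete_topology_unique discrete_space_def by auto
  hence "compact_space (discrete_topology (topspace X))" using assms(1) by simp
  thus False using assms(2) compact_space_discrete_topology by blast
qed

lemma transfer_top:
  fixes T :: "'b topology" and phi :: "'b \<Rightarrow> 'c" and psi :: "'c \<Rightarrow> 'b"
  assumes inv: "\<forall>x\<in>topspace T. psi (phi x) = x"
    and inf: "infinite (topspace T)" and H: "Hausdorff_space T" and C: "compact_space T"
    and NC: "\<not> has_nontrivial_convergent_seq T"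
    and B: "base_of T BB" "BB \<lesssim> K"
  shows "\<exists>T' :: 'c topology. infinite (topspace T') \<and> Hausdorff_space T' \<and> compact_space T' \<and>
           non_sequential T' \<and> (\<exists>BB'. base_of T' BB' \<and> BB' \<lesssim> K)"
proof -
  define T' where "T' = pullback_topology (phi ` topspace T) psi T"
  have ts: "topspace T' = phi ` topspace T"
    unfolding T'_def topspace_pullback_topology using inv by auto
  have c1: "continuous_map T' T psi"
    using continuous_map_pullback[OF continuous_map_id, of "phi ` topspace T" psi] unfolding T'_def by simp
  have "continuous_map T T (psi \<circ> phi)"
    by (rule continuous_map_eq[OF continuous_map_id]) (simp add: inv)
  hence c2: "continuous_map T T' phi" unfolding T'_def by (rule continuous_map_pullback') auto
  have hm: "homeomorphic_maps T T' phi psi"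
    unfolding homeomorphic_maps_def using c1 c2 inv ts by auto
  hence hs: "T homeomorphic_space T'" unfolding homeomorphic_space_def by blast
  have injphi: "inj_on phi (topspace T)" using inv by (metis inj_on_inverseI)
  have inf': "infinite (topspace T')" using ts inf injphi by (simp add: finite_image_iff)
  have C': "compact_space T'" using C homeomorphic_compact_space[OF hs] by simp
  have H': "Hausdorff_space T'" using H homeomorphic_Hausdorff_space[OF hs] by simp
  have NC': "\<not> has_nontrivial_convergent_seq T'"
  proof
    assume "has_nontrivial_convergent_seq T'"
    then obtain f l where f: "range f \<subseteq> topspace T'" "inj f" "limitin T' f l sequentially"
      unfolding has_nontrivial_convergent_seq_def by blast
    have "limitin T (psi \<circ> f) (psi l) sequentially" using continuous_map_limit[OF c1 f(3)] .
    moreover have "range (psi \<circ> f) \<subseteq> topspace T" using f(1) c1 continuous_map_image_subset_topspace by fastforce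
    moreover have "inj (psi \<circ> f)"
    proof (rule injI)
      fix a b assume "(psi \<circ> f) a = (psi \<circ> f) b"
      moreover have "f a \<in> phi ` topspace T" "f b \<in> phi ` topspace T" using f(1) ts by auto
      ultimately have "f a = f b" using inv by auto
      thus "a = b" using f(2) by (simp add: inj_eq)
    qed
    ultimately show False using NC unfolding has_nontrivial_convergent_seq_def by blast
  qed
  have hmap: "homeomorphic_map T T' phi" using hm homeomorphic_maps_map by blast
  have om': "open_map T T' phi" using homeomorphic_imp_open_map[OF hmap] .
  have "base_of T' ((\<lambda>V. phi ` V) ` BB)"
    unfolding base_of_def
  proof (intro conjI ballI allI impI)
    fix W assume "W \<in> (\<lambda>V. phi ` V) ` BB"
    then obtain V where "V \<in> BB" "W = phi ` V" by blast
    thus "openin T' W" using om' B(1) unfolding open_map_def base_of_def by blast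
  next
    fix U y assume Uy: "openin T' U \<and> y \<in> U"
    define V where "V = {x \<in> topspace T. phi x \<in> U}"
    have "openin T V" unfolding V_def using c2 Uy by (simp add: continuous_map_def)
    moreover have "psi y \<in> V" using Uy ts inv openin_subset unfolding V_def by fastforce
    ultimately obtain B0 where B0: "B0 \<in> BB" "psi y \<in> B0" "B0 \<subseteq> V" using B(1) unfolding base_of_def by blast
    have "y = phi (psi y)" using Uy ts inv openin_subset by fastforce
    hence "y \<in> phi ` B0" using B0 by blast
    moreover have "phi ` B0 \<subseteq> U" using B0(3) unfolding V_def by blast
    ultimately show "\<exists>W\<in>(\<lambda>V. phi ` V) ` BB. y \<in> W \<and> W \<subseteq> U" using B0(1) by blast
  qed
  moreover have "(\<lambda>V. phi ` V) ` BB \<lesssim> K" by (rule lepoll_trans[OF image_lepoll B(2)])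
  ultimately show ?thesis using inf' C' H' NC' compact_infinite_not_discrete[OF C' inf']
    unfolding non_sequential_def by blast
qed


locale constr =
  fixes K :: "'a set" and CC :: "'a set set" and UU :: "real set set"
    and dec :: "'a \<Rightarrow> 'a set \<times> real set \<times> real set"
  assumes K_unc: "\<not> countable K"
    and CC_cof: "countable_cofinal K CC"
    and UU_split: "real_splitting_family UU"
    and dec_onto: "CC \<times> UU \<times> UU \<subseteq> dec ` K"
    and dec_into: "dec ` K \<subseteq> CC \<times> UU \<times> UU"
begin

definition II :: "(nat set \<times> 'a) set" where "II = Om \<times> K"
definition Par :: "nat set \<times> 'a \<Rightarrow> (nat set \<times> 'a) set" where
  "Par i = {p. olt (fst p) (fst i) \<and> snd p \<in> fst (dec (snd i))}"
definition enum :: "nat set \<times> 'a \<Rightarrow> nat \<Rightarrow> nat set \<times> 'a" where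
  "enum i = from_nat_into (Par i)"
definition GG :: "nat set \<times> 'a \<Rightarrow> (nat \<Rightarrow> bool) set" where
  "GG i = cantor -` fst (snd (dec (snd i)))"
definition SS :: "nat set \<times> 'a \<Rightarrow> nat set" where
  "SS i = {n. real n \<in> snd (snd (dec (snd i)))}"
definition WW where "WW i = Wset (GG i) (SS i)"
definition EE where "EE i = Eset (GG i) (SS i)"
definition ok :: "(nat set \<times> 'a \<Rightarrow> bool) \<Rightarrow> nat set \<times> 'a \<Rightarrow> bool" where
  "ok x i \<longleftrightarrow> Par i = {} \<or> ((x i \<longrightarrow> x \<circ> enum i \<notin> EE i) \<and> (\<not> x i \<longrightarrow> x \<circ> enum i \<notin> WW i))"
definition T0 :: "(nat set \<times> 'a \<Rightarrow> bool) topology" where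
  "T0 = product_topology (\<lambda>_. discrete_topology UNIV) II"
definition XX where "XX = {x \<in> topspace T0. \<forall>i\<in>II. ok x i}"
definition TT where "TT = subtopology T0 XX"

lemma ts_T0: "topspace T0 = (\<Pi>\<^sub>E i\<in>II. UNIV)"
  by (simp add: T0_def)

lemma CC_sub: "C \<in> CC \<Longrightarrow> C \<subseteq> K \<and> countable C"
  using CC_cof unfolding countable_cofinal_def by blast

lemma dec_prop: "k \<in> K \<Longrightarrow> fst (dec k) \<in> CC \<and> fst (snd (dec k)) \<in> UU \<and> snd (snd (dec k)) \<in> UU"
proof -
  assume k: "k \<in> K"
  have "dec k \<in> CC \<times> UU \<times> UU" using dec_into imageI[OF k, of dec] by (rule subsetD)
  thus ?thesis by (simp add: mem_Times_iff)
qed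

lemma II_iff: "i \<in> II \<longleftrightarrow> fst i \<in> Om \<and> snd i \<in> K"
  unfolding II_def by (simp add: mem_Times_iff)

lemma Par_iff: "p \<in> Par i \<longleftrightarrow> olt (fst p) (fst i) \<and> snd p \<in> fst (dec (snd i))"
  unfolding Par_def by simp

lemma Par_sub: "i \<in> II \<Longrightarrow> Par i \<subseteq> II"
proof
  fix p assume i: "i \<in> II" and p: "p \<in> Par i"
  have "fst p \<in> Om" using p olt_Om unfolding Par_iff by blast
  moreover have "fst (dec (snd i)) \<in> CC" using dec_prop i unfolding II_iff by blast
  hence "fst (dec (snd i)) \<subseteq> K" using CC_sub by blast
  hence "snd p \<in> K" using p unfolding Par_iff by blast
  ultimately show "p \<in> II" unfolding II_iff by blast
qed

lemma Par_countable: "i \<in> II \<Longrightarrow> countable (Par i)"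
proof -
  assume i: "i \<in> II"
  have sub: "Par i \<subseteq> {b. olt b (fst i)} \<times> fst (dec (snd i))" unfolding Par_iff by (auto simp: Par_def)
  have c1: "countable {b. olt b (fst i)}" using i Om_countable_below unfolding II_iff by blast
  have "fst (dec (snd i)) \<in> CC" using dec_prop i unfolding II_iff by blast
  hence c2: "countable (fst (dec (snd i)))" using CC_sub by blast
  have "countable ({b. olt b (fst i)} \<times> fst (dec (snd i)))" using c1 c2 by (rule countable_SIGMA)
  thus ?thesis using sub by (rule countable_subset[rotated])
qed

lemma GG_popen: "i \<in> II \<Longrightarrow> popen (GG i)"
proof -
  assume i: "i \<in> II"
  have "fst (snd (dec (snd i))) \<in> UU" using i dec_prop unfolding II_iff by blast
  hence "open (fst (snd (dec (snd i))))" using UU_split unfolding real_splitting_family_def by blast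
  thus ?thesis unfolding GG_def by (rule UC_popen)
qed

lemma enum_in: "Par i \<noteq> {} \<Longrightarrow> enum i n \<in> Par i"
  unfolding enum_def by (rule from_nat_into)

lemma open_cyl:
  assumes S: "S \<subseteq> topspace T0"
    and cyl: "\<forall>x\<in>S. \<exists>F. finite F \<and> F \<subseteq> II \<and> (\<forall>y\<in>topspace T0. (\<forall>j\<in>F. y j = x j) \<longrightarrow> y \<in> S)"
  shows "openin T0 S"
  unfolding T0_def openin_product_topology_alt
proof
  fix x assume x: "x \<in> S"
  obtain F where F: "finite F" "F \<subseteq> II" "\<forall>y\<in>topspace T0. (\<forall>j\<in>F. y j = x j) \<longrightarrow> y \<in> S"
    using bspec[OF cyl x] by (elim exE conjE)
  define U where "U = (\<lambda>j. if j \<in> F then {x j} else (UNIV::bool set))"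
  have "{i \<in> II. U i \<noteq> topspace (discrete_topology UNIV)} \<subseteq> F" unfolding U_def by auto
  hence fin: "finite {i \<in> II. U i \<noteq> topspace (discrete_topology UNIV)}" by (rule finite_subset[OF _ F(1)])
  have opn: "\<forall>i\<in>II. openin (discrete_topology UNIV) (U i)" by simp
  have xt: "x \<in> topspace T0" by (rule subsetD[OF S x])
  hence xe: "x \<in> extensional II" unfolding ts_T0 by (simp add: PiE_def)
  have xin: "x \<in> Pi\<^sub>E II U" unfolding PiE_def Pi_def using xe unfolding U_def by simp
  have sub: "Pi\<^sub>E II U \<subseteq> S"
  proof
    fix y assume y: "y \<in> Pi\<^sub>E II U"
    hence "y \<in> extensional II" by (simp add: PiE_def)
    hence "y \<in> topspace T0" unfolding ts_T0 by (simp add: PiE_def)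
    moreover have "\<forall>j\<in>F. y j = x j"
    proof
      fix j assume j: "j \<in> F"
      hence "j \<in> II" using F(2) by blast
      hence "y j \<in> U j" using y by (simp add: PiE_mem)
      thus "y j = x j" using j unfolding U_def by simp
    qed
    ultimately show "y \<in> S" using F(3) by blast
  qed
  show "\<exists>U. finite {i \<in> II. U i \<noteq> topspace (discrete_topology UNIV)} \<and>
       (\<forall>i\<in>II. openin (discrete_topology UNIV) (U i)) \<and> x \<in> Pi\<^sub>E II U \<and> Pi\<^sub>E II U \<subseteq> S"
    using fin opn xin sub by blast
qed

lemma closed_XX: "closedin T0 XX"
  unfolding closedin_def
proof
  show "XX \<subseteq> topspace T0" unfolding XX_def by blast
  show "openin T0 (topspace T0 - XX)"
  proof (rule open_cyl)
    show "topspace T0 - XX \<subseteq> topspace T0" by blast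
    show "\<forall>x\<in>topspace T0 - XX. \<exists>F. finite F \<and> F \<subseteq> II \<and>
            (\<forall>y\<in>topspace T0. (\<forall>j\<in>F. y j = x j) \<longrightarrow> y \<in> topspace T0 - XX)"
    proof
      fix x assume x: "x \<in> topspace T0 - XX"
      then obtain i where i: "i \<in> II" "\<not> ok x i" unfolding XX_def by blast
      have P: "Par i \<noteq> {}" using i(2) unfolding ok_def by blast
      define m where "m = dd (GG i) (x \<circ> enum i)"
      define F where "F = insert i (enum i ` {..<m})"
      have "finite F" unfolding F_def by simp
      moreover have "F \<subseteq> II" unfolding F_def using i(1) Par_sub enum_in[OF P] by blast
      moreover have "\<forall>y\<in>topspace T0. (\<forall>j\<in>F. y j = x j) \<longrightarrow> y \<in> topspace T0 - XX"
      proof (intro ballI impI)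
        fix y assume y: "y \<in> topspace T0" and ag: "\<forall>j\<in>F. y j = x j"
        have yi: "y i = x i" using ag unfolding F_def by simp
        have agr: "agree m (x \<circ> enum i) (y \<circ> enum i)" using ag unfolding F_def agree_def by simp
        have "\<not> ok y i"
        proof (cases "x i")
          case True
          hence "x \<circ> enum i \<in> EE i" using i(2) unfolding ok_def by blast
          hence "y \<circ> enum i \<in> EE i" using Eset_open[OF GG_popen[OF i(1)]] agr unfolding EE_def m_def by blast
          thus ?thesis using True yi P unfolding ok_def by simp
        next
          case False
          hence "x \<circ> enum i \<in> WW i" using i(2) unfolding ok_def by blast
          hence "y \<circ> enum i \<in> WW i" using Wset_open[OF GG_popen[OF i(1)]] agr unfolding WW_def m_def by blast
          thus ?thesis using False yi P unfolding ok_def by simp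
        qed
        thus "y \<in> topspace T0 - XX" using y i(1) unfolding XX_def by blast
      qed
      ultimately show "\<exists>F. finite F \<and> F \<subseteq> II \<and>
            (\<forall>y\<in>topspace T0. (\<forall>j\<in>F. y j = x j) \<longrightarrow> y \<in> topspace T0 - XX)" by blast
    qed
  qed
qed

lemma ts_TT: "topspace TT = XX"
  unfolding TT_def XX_def by auto

lemma compact_TT: "compact_space TT"
proof -
  have "compact_space T0" unfolding T0_def
    by (simp add: compact_space_product_topology compact_space_discrete_topology)
  hence "compactin T0 XX" using closed_XX closedin_compact_space by blast
  thus ?thesis unfolding TT_def by (rule compact_space_subtopology)
qed

lemma Hausdorff_TT: "Hausdorff_space TT"
proof -
  have "Hausdorff_space T0" unfolding T0_def
    by (simp add: Hausdorff_space_product_topology)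
  thus ?thesis unfolding TT_def by (rule Hausdorff_space_subtopology)
qed

end


context constr
begin

definition RR :: "((nat set \<times> 'a) \<times> (nat set \<times> 'a)) set" where
  "RR = inv_image {(a,b). olt a b} fst"

lemma RR_wf: "wf RR"
  unfolding RR_def by (rule wf_inv_image[OF om_wf])

definition FF :: "'a \<Rightarrow> ((nat set \<times> 'a) \<Rightarrow> bool) \<Rightarrow> (nat set \<times> 'a) \<Rightarrow> bool" where
  "FF k g i = (if Par i = {} then snd i = k else (g \<circ> enum i) \<in> WW i)"

definition gg :: "'a \<Rightarrow> (nat set \<times> 'a) \<Rightarrow> bool" where
  "gg k = wfrec RR (FF k)"

lemma gg_eq: "gg k i = (if Par i = {} then snd i = k else (gg k \<circ> enum i) \<in> WW i)"
proof -
  have "gg k i = FF k (cut (gg k) RR i) i" unfolding gg_def by (rule wfrec[OF RR_wf])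
  moreover have "Par i \<noteq> {} \<Longrightarrow> cut (gg k) RR i \<circ> enum i = gg k \<circ> enum i"
  proof
    fix n assume P: "Par i \<noteq> {}"
    have "olt (fst (enum i n)) (fst i)" using enum_in[OF P, of n] unfolding Par_iff by blast
    hence "(enum i n, i) \<in> RR" unfolding RR_def by simp
    thus "(cut (gg k) RR i \<circ> enum i) n = (gg k \<circ> enum i) n" by (simp add: cut_apply)
  qed
  ultimately show ?thesis unfolding FF_def by simp
qed

definition pt :: "'a \<Rightarrow> (nat set \<times> 'a) \<Rightarrow> bool" where
  "pt k = restrict (gg k) II"

lemma pt_in: "pt k \<in> XX"
  unfolding XX_def
proof (intro CollectI conjI ballI)
  show "pt k \<in> topspace T0" unfolding ts_T0 pt_def by simp
next
  fix i assume i: "i \<in> II"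
  show "ok (pt k) i"
  proof (cases "Par i = {}")
    case True thus ?thesis unfolding ok_def by simp
  next
    case False
    have comp: "pt k \<circ> enum i = gg k \<circ> enum i"
    proof
      fix n have "enum i n \<in> II" using enum_in[OF False] Par_sub[OF i] by blast
      thus "(pt k \<circ> enum i) n = (gg k \<circ> enum i) n" unfolding pt_def by simp
    qed
    have val: "pt k i = ((gg k \<circ> enum i) \<in> WW i)" unfolding pt_def using i gg_eq[of k i] False by simp
    show ?thesis unfolding ok_def comp val using WE_disj unfolding WW_def EE_def by blast
  qed
qed

lemma pt_inj: "inj_on pt K"
proof (rule inj_onI)
  fix k k' assume k: "k \<in> K" and k': "k' \<in> K" and eq: "pt k = pt k'"
  obtain a0 where a0: "a0 \<in> Om" "\<forall>b. \<not> olt b a0" using Om_min by blast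
  have P: "Par (a0, k) = {}" using a0(2) unfolding Par_def by auto
  have i: "(a0, k) \<in> II" using a0(1) k unfolding II_iff by simp
  have "pt k (a0, k) = (k = k)" unfolding pt_def using i gg_eq[of k "(a0,k)"] P by simp
  moreover have "pt k' (a0, k) = (k = k')" unfolding pt_def using i gg_eq[of k' "(a0,k)"] P by simp
  ultimately show "k = k'" using eq by simp
qed

lemma XX_infinite: "infinite XX"
proof
  assume "finite XX"
  moreover have "pt ` K \<subseteq> XX" using pt_in by blast
  ultimately have "finite (pt ` K)" by (rule finite_subset[rotated])
  hence "finite K" using pt_inj by (simp add: finite_image_iff)
  thus False using K_unc by (simp add: countable_finite)
qed

lemma limit_coord:
  assumes "limitin TT f l sequentially" "i \<in> II"
  shows "eventually (\<lambda>n. f n i = l i) sequentially"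
proof -
  have "limitin T0 f l sequentially" using assms(1) unfolding TT_def limitin_subtopology by blast
  hence "limitin (discrete_topology UNIV) (\<lambda>c. f c i) (l i) sequentially"
    using assms(2) unfolding T0_def limitin_componentwise by blast
  hence "eventually (\<lambda>n. f n i \<in> {l i}) sequentially"
    unfolding limitin_def by (metis openin_discrete_topology singletonI subset_UNIV)
  thus ?thesis by simp
qed

lemma no_conv: "\<not> has_nontrivial_convergent_seq TT"
proof
  assume "has_nontrivial_convergent_seq TT"
  then obtain f l where f: "range f \<subseteq> XX" "inj f" and lim: "limitin TT f l sequentially"
    unfolding has_nontrivial_convergent_seq_def ts_TT by blast
  have fT: "f n \<in> topspace T0" for n using f(1) unfolding XX_def by blast
  have lT: "l \<in> XX" using lim unfolding limitin_def ts_TT by blast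
  hence lT0: "l \<in> topspace T0" unfolding XX_def by blast
  have sepex: "\<exists>i. i \<in> II \<and> f n i \<noteq> f m i" if "n \<noteq> m" for n m
  proof (rule ccontr)
    assume "\<not> (\<exists>i. i \<in> II \<and> f n i \<noteq> f m i)"
    hence "\<forall>i\<in>II. f n i = f m i" by blast
    moreover have "f n \<in> extensional II" "f m \<in> extensional II" using fT unfolding ts_T0 by (auto simp: PiE_def)
    ultimately have "f n = f m" by (intro extensionalityI[of "f n" II "f m"]) auto
    thus False using f(2) that by (simp add: inj_eq)
  qed
  define sep where "sep n m = (SOME i. i \<in> II \<and> f n i \<noteq> f m i)" for n m
  have sep: "sep n m \<in> II \<and> f n (sep n m) \<noteq> f m (sep n m)" if "n \<noteq> m" for n m
    unfolding sep_def by (rule someI_ex[OF sepex[OF that]])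
  define A where "A = (\<lambda>p. sep (fst p) (snd p)) ` {p :: nat \<times> nat. fst p \<noteq> snd p}"
  have cA: "countable A" unfolding A_def by simp
  have AII: "A \<subseteq> II" unfolding A_def using sep by auto
  have "countable (fst ` A)" using cA by simp
  moreover have "fst ` A \<subseteq> Om"
  proof
    fix b assume "b \<in> fst ` A"
    then obtain p where p: "p \<in> A" "b = fst p" by blast
    have "p \<in> II" using AII p(1) by blast
    thus "b \<in> Om" using p(2) by (simp add: II_iff)
  qed
  ultimately have "\<exists>a\<in>Om. \<forall>b\<in>fst ` A. olt b a" by (rule Om_bound)
  then obtain a1 where a1: "a1 \<in> Om" "\<forall>b\<in>fst ` A. olt b a1" by (elim bexE)
  have "snd ` A \<subseteq> K"
  proof
    fix b assume "b \<in> snd ` A"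
    then obtain p where p: "p \<in> A" "b = snd p" by blast
    have "p \<in> II" using AII p(1) by blast
    thus "b \<in> K" using p(2) by (simp add: II_iff)
  qed
  moreover have "countable (snd ` A)" using cA by simp
  moreover have cof2: "\<And>B. B \<subseteq> K \<Longrightarrow> countable B \<Longrightarrow> \<exists>C\<in>CC. B \<subseteq> C"
    using CC_cof unfolding countable_cofinal_def by blast
  ultimately have "\<exists>C\<in>CC. snd ` A \<subseteq> C" by blast
  then obtain C where C: "C \<in> CC" "snd ` A \<subseteq> C" by (elim bexE)
  define P where "P = {p. olt (fst p) a1 \<and> snd p \<in> C}"
  have AP: "A \<subseteq> P"
  proof
    fix p assume p: "p \<in> A"
    have "olt (fst p) a1" using a1(2) p by blast
    moreover have "snd p \<in> C" using C(2) p by blast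
    ultimately show "p \<in> P" unfolding P_def by simp
  qed
  have "sep 0 1 \<in> A" unfolding A_def by (rule image_eqI[of _ _ "(0,1)"]) auto
  hence Pne: "P \<noteq> {}" using AP by blast
  have cP: "countable P"
  proof -
    have "P \<subseteq> {b. olt b a1} \<times> C" unfolding P_def by auto
    moreover have "countable ({b. olt b a1} \<times> C)"
    proof (rule countable_SIGMA)
      show "countable {b. olt b a1}" using Om_countable_below[OF a1(1)] .
      show "countable C" if "i \<in> {b. olt b a1}" for i using CC_sub[OF C(1)] by blast
    qed
    ultimately show ?thesis by (rule countable_subset)
  qed
  define e where "e = from_nat_into P"
  have rng: "range e = P" unfolding e_def using Pne cP by (rule range_from_nat_into)
  have PII: "P \<subseteq> II"
  proof
    fix p assume "p \<in> P"
    hence "olt (fst p) a1" "snd p \<in> C" unfolding P_def by auto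
    moreover have "fst p \<in> Om" using olt_Om calculation(1) by blast
    moreover have "snd p \<in> K" using CC_sub[OF C(1)] calculation(2) by blast
    ultimately show "p \<in> II" by (simp add: II_iff)
  qed
  define q where "q = (\<lambda>n. f n \<circ> e)"
  define q0 where "q0 = l \<circ> e"
  have qinj: "inj q"
  proof (rule injI, rule ccontr)
    fix n m assume eq: "q n = q m" and ne: "n \<noteq> m"
    have "sep n m \<in> A" unfolding A_def using ne by (intro image_eqI[of _ _ "(n,m)"]) auto
    hence "sep n m \<in> range e" using AP rng by blast
    then obtain t where t: "e t = sep n m" by auto
    have "q n t = q m t" using eq by simp
    thus False using sep[OF ne] t unfolding q_def by simp
  qed
  have conv: "\<forall>j. eventually (\<lambda>n. q n j = q0 j) sequentially"
  proof
    fix j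
    have "e j \<in> II" using rng PII by blast
    thus "eventually (\<lambda>n. q n j = q0 j) sequentially"
      unfolding q_def q0_def using limit_coord[OF lim] by simp
  qed
  obtain U1 where U1: "U1 \<in> UU" "infinite {n. q n \<in> cantor -` U1}" "q0 \<notin> cantor -` U1"
    using split_cantor[OF UU_split qinj conv] by blast
  define G where "G = cantor -` U1"
  have Gp: "popen G" unfolding G_def using U1(1) UU_split UC_popen unfolding real_splitting_family_def by blast
  have Dinf: "infinite ((\<lambda>n. dd G (q n)) ` {n. q n \<in> G})"
    using D_infinite[OF Gp conv] U1(2,3) unfolding G_def by blast
  obtain U2 where U2: "U2 \<in> UU" "infinite ((\<lambda>n. dd G (q n)) ` {n. q n \<in> G} \<inter> {n. real n \<in> U2})"
      "infinite ((\<lambda>n. dd G (q n)) ` {n. q n \<in> G} - {n. real n \<in> U2})"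
    using split_nat[OF UU_split Dinf] by blast
  define S where "S = {n. real n \<in> U2}"
  have Winf: "infinite {n. q n \<in> Wset G S}" and Einf: "infinite {n. q n \<in> Eset G S}"
    using WE_infinite[of G q S] U2(2,3) unfolding S_def by blast+
  have "(C, U1, U2) \<in> CC \<times> UU \<times> UU" using C(1) U1(1) U2(1) by simp
  hence "(C, U1, U2) \<in> dec ` K" by (rule subsetD[OF dec_onto])
  then obtain k where k: "k \<in> K" "dec k = (C, U1, U2)" by (metis imageE)
  define i where "i = (a1, k)"
  have iII: "i \<in> II" unfolding i_def II_iff using a1(1) k(1) by simp
  have Pi: "Par i = P" unfolding i_def Par_def P_def using k(2) by simp
  have ei: "enum i = e" unfolding enum_def e_def Pi ..
  have Wi: "WW i = Wset G S" unfolding WW_def GG_def SS_def G_def S_def i_def using k(2) by simp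
  have Ei: "EE i = Eset G S" unfolding EE_def GG_def SS_def G_def S_def i_def using k(2) by simp
  have okn: "ok (f n) i" for n
  proof -
    have "f n \<in> XX" using f(1) by blast
    thus ?thesis using iII unfolding XX_def by blast
  qed
  have okn': "(f n i \<longrightarrow> q n \<notin> Eset G S) \<and> (\<not> f n i \<longrightarrow> q n \<notin> Wset G S)" for n
    using okn[of n] Pne unfolding ok_def Pi ei Wi Ei q_def by simp
  have T: "f n i" if "q n \<in> Wset G S" for n using okn'[of n] that by blast
  have F: "\<not> f n i" if "q n \<in> Eset G S" for n using okn'[of n] that by blast
  obtain N where N: "\<forall>n\<ge>N. f n i = l i" using limit_coord[OF lim iII] unfolding eventually_sequentially by blast
  obtain n1 where n1: "n1 \<ge> N" "q n1 \<in> Wset G S" using Winf unfolding infinite_nat_iff_unbounded_le by blast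
  obtain n2 where n2: "n2 \<ge> N" "q n2 \<in> Eset G S" using Einf unfolding infinite_nat_iff_unbounded_le by blast
  have "f n1 i = l i" using N n1(1) by blast
  moreover have "f n2 i = l i" using N n2(1) by blast
  ultimately show False using T[OF n1(2)] F[OF n2(2)] by simp
qed

definition BBs where
  "BBs = (\<lambda>L. {x \<in> XX. \<forall>p\<in>L. x (fst p) = snd p}) ` Fpow (II \<times> (UNIV::bool set))"

lemma base_TT: "base_of TT BBs"
  unfolding base_of_def
proof (intro conjI ballI allI impI)
  fix V assume "V \<in> BBs"
  then obtain L where L: "L \<in> Fpow (II \<times> (UNIV::bool set))" "V = {x \<in> XX. \<forall>p\<in>L. x (fst p) = snd p}"
    unfolding BBs_def by blast
  define Op where "Op = {x \<in> topspace T0. \<forall>p\<in>L. x (fst p) = snd p}"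
  have "openin T0 Op"
  proof (rule open_cyl)
    show "Op \<subseteq> topspace T0" unfolding Op_def by blast
    show "\<forall>x\<in>Op. \<exists>F. finite F \<and> F \<subseteq> II \<and> (\<forall>y\<in>topspace T0. (\<forall>j\<in>F. y j = x j) \<longrightarrow> y \<in> Op)"
    proof
      fix x assume x: "x \<in> Op"
      have "finite (fst ` L)" "fst ` L \<subseteq> II" using L(1) unfolding Fpow_def by auto
      moreover have "\<forall>y\<in>topspace T0. (\<forall>j\<in>fst ` L. y j = x j) \<longrightarrow> y \<in> Op"
        using x unfolding Op_def by auto
      ultimately show "\<exists>F. finite F \<and> F \<subseteq> II \<and> (\<forall>y\<in>topspace T0. (\<forall>j\<in>F. y j = x j) \<longrightarrow> y \<in> Op)"
        by blast
    qed
  qed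
  moreover have "V = Op \<inter> XX" unfolding L(2) Op_def XX_def by auto
  ultimately show "openin TT V" unfolding TT_def openin_subtopology by blast
next
  fix U x assume Ux: "openin TT U \<and> x \<in> U"
  then obtain Op where Op: "openin T0 Op" "U = Op \<inter> XX" unfolding TT_def openin_subtopology by blast
  have xO: "x \<in> Op" and xX: "x \<in> XX" using Ux Op(2) by auto
  obtain W where W: "finite {i \<in> II. W i \<noteq> topspace (discrete_topology (UNIV::bool set))}"
      "x \<in> Pi\<^sub>E II W" "Pi\<^sub>E II W \<subseteq> Op"
    using Op(1) xO unfolding T0_def openin_product_topology_alt by blast
  define F where "F = {i \<in> II. W i \<noteq> UNIV}"
  have finF: "finite F" using W(1) unfolding F_def by simp
  define L where "L = (\<lambda>j. (j, x j)) ` F"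
  have LF: "L \<in> Fpow (II \<times> (UNIV::bool set))" unfolding L_def Fpow_def F_def using finF F_def by auto
  define V where "V = {y \<in> XX. \<forall>p\<in>L. y (fst p) = snd p}"
  have "V \<in> BBs" unfolding BBs_def V_def using LF by blast
  moreover have "x \<in> V" unfolding V_def L_def using xX by auto
  moreover have "V \<subseteq> U"
  proof
    fix y assume y: "y \<in> V"
    hence yX: "y \<in> XX" and yL: "\<forall>j\<in>F. y j = x j" unfolding V_def L_def by auto
    have "y \<in> extensional II" using yX unfolding XX_def ts_T0 by (auto simp: PiE_def)
    moreover have "\<forall>j\<in>II. y j \<in> W j"
    proof
      fix j assume j: "j \<in> II"
      show "y j \<in> W j"
      proof (cases "j \<in> F")
        case True thus ?thesis using yL W(2) j by (simp add: PiE_mem)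
      next
        case False thus ?thesis using j unfolding F_def by simp
      qed
    qed
    ultimately have "y \<in> Pi\<^sub>E II W" by (simp add: PiE_def Pi_def)
    thus "y \<in> U" using W(3) yX Op(2) by blast
  qed
  ultimately show "\<exists>V\<in>BBs. x \<in> V \<and> V \<subseteq> U" by blast
qed

lemma II_lepoll: "II \<lesssim> K"
proof -
  have "Om \<lesssim> K" using Om_lepoll K_unc by blast
  moreover have "infinite K" using K_unc countable_finite by blast
  ultimately show ?thesis unfolding II_def using times_lepoll_K lepoll_refl by blast
qed

lemma BBs_lepoll: "BBs \<lesssim> K"
proof -
  have infK: "infinite K" using K_unc countable_finite by blast
  have "(UNIV::bool set) \<lesssim> K" by (rule finite_lepoll_infinite[OF infK]) simp
  hence IB: "II \<times> (UNIV::bool set) \<lesssim> K" using times_lepoll_K[OF infK II_lepoll] by blast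
  have "infinite II"
  proof
    assume "finite II"
    obtain a where "a \<in> Om" using Om_min by blast
    hence "Pair a ` K \<subseteq> II" unfolding II_def by auto
    hence "finite (Pair a ` K)" using \<open>finite II\<close> finite_subset by blast
    thus False using infK by (simp add: finite_image_iff inj_on_def)
  qed
  moreover have "II \<noteq> {}" using \<open>infinite II\<close> by auto
  ultimately have "infinite (II \<times> (UNIV::bool set))" by (simp add: finite_cartesian_product_iff)
  hence "Fpow (II \<times> (UNIV::bool set)) \<approx> II \<times> (UNIV::bool set)" by (rule eqpoll_Fpow)
  hence "Fpow (II \<times> (UNIV::bool set)) \<lesssim> K" using IB by (rule lepoll_trans1)
  thus ?thesis unfolding BBs_def by (rule lepoll_trans[OF image_lepoll])
qed

end

lemma final_result:
  fixes K :: "'a set"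
  assumes "sR_le K" and "cof_countable_eq K"
  shows "z_le K"
proof -
  have unc: "\<not> countable K" using K_uncountable assms by blast
  have infK: "infinite K" using unc countable_finite by blast
  obtain UU where UU: "real_splitting_family UU" "UU \<lesssim> K" using assms(1) unfolding sR_le_def by blast
  obtain CC where CC: "countable_cofinal K CC" "CC \<lesssim> K" using assms(2) unfolding cof_countable_eq_def by blast
  have "CC \<times> UU \<lesssim> K" using times_lepoll_K[OF infK CC(2) UU(2)] .
  hence "(CC \<times> UU) \<times> UU \<lesssim> K" using times_lepoll_K[OF infK _ UU(2)] by blast
  hence C3: "CC \<times> UU \<times> UU \<lesssim> K" by (rule lepoll_trans1[OF eqpoll_sym[OF times_assoc_eqpoll]])
  then obtain g where g: "CC \<times> UU \<times> UU \<subseteq> g ` K" unfolding lepoll_iff by blast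
  obtain C0 where C0: "C0 \<in> CC" using CC(1) unfolding countable_cofinal_def by blast
  have "infinite (range (real :: nat \<Rightarrow> real))" by (rule range_inj_infinite) (simp add: inj_on_def)
  then obtain U0 where U0: "U0 \<in> UU" using UU(1) unfolding real_splitting_family_def by blast
  have ne: "(C0, U0, U0) \<in> CC \<times> UU \<times> UU" using C0 U0 by simp
  define dec where "dec k = (if g k \<in> CC \<times> UU \<times> UU then g k else (C0, U0, U0))" for k
  have dec_onto: "CC \<times> UU \<times> UU \<subseteq> dec ` K"
  proof
    fix t assume t: "t \<in> CC \<times> UU \<times> UU"
    then obtain k where "k \<in> K" "t = g k" using g by blast
    thus "t \<in> dec ` K" unfolding dec_def using t by auto
  qed
  have dec_into: "dec ` K \<subseteq> CC \<times> UU \<times> UU" unfolding dec_def using ne by auto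
  interpret c: constr K CC UU dec
    using unc CC(1) UU(1) dec_onto dec_into by unfold_locales
  obtain h where h: "inj_on h c.II" "h ` c.II \<subseteq> K" using c.II_lepoll unfolding lepoll_def by blast
  define phi where "phi x = h ` {i \<in> c.II. x i}" for x :: "nat set \<times> 'a \<Rightarrow> bool"
  define psi where "psi S = restrict (\<lambda>i. h i \<in> S) c.II" for S
  have inv: "\<forall>x\<in>topspace c.TT. psi (phi x) = x"
  proof
    fix x assume "x \<in> topspace c.TT"
    hence x: "x \<in> extensional c.II" unfolding c.ts_TT c.XX_def c.ts_T0 by (auto simp: PiE_def)
    have "psi (phi x) \<in> extensional c.II" unfolding psi_def by simp
    moreover have "psi (phi x) i = x i" if i: "i \<in> c.II" for i
    proof -
      have "(h i \<in> h ` {j \<in> c.II. x j}) = x i" using h(1) i by (auto simp: inj_on_def)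
      thus ?thesis unfolding psi_def phi_def using i by simp
    qed
    ultimately show "psi (phi x) = x" using x by (intro extensionalityI[of _ c.II]) auto
  qed
  have "infinite (topspace c.TT)" using c.XX_infinite c.ts_TT by simp
  thus ?thesis
    using transfer_top[OF inv _ c.Hausdorff_TT c.compact_TT c.no_conv c.base_TT c.BBs_lepoll]
    unfolding z_le_def by blast
qed


theorem theorem2p9:
  fixes K :: "'a set"
  assumes "sR_le K"
    and "cof_countable_eq K"
  shows "z_le K"
  using final_result[OF assms] .

end
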